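(* Let $F$ be a field of characteristic $0$ and let $b_1,\dots,b_n$ be indeterminates. Then in the field $F(b_1,\dots,b_n)$ of rational functions, \[\sum_{\sigma\in S_n}\frac{\operatorname{sgn}(\sigma)}{b_{\sigma(1)}(b_{\sigma(1)}+b_{\sigma(2)})\cdots(b_{\sigma(1)}+\cdots+b_{\sigma(n)})}=2^n\frac{\prod_{1\le i<j\le n}(b_j-b_i)}{\prod_{1\le i\le j\le n}(b_i+b_j)},\] where $S_n$ is the symmetric group on $n$ letters. *)

theory Defs
  imports "HOL-Combinatorics.Permutations"
begin

end

theory Submission
  imports Defs
begin


definition cc :: "'a::field set \<Rightarrow> 'a \<Rightarrow> 'a" where
  "cc X x = 2 * x * (\<Prod>y\<in>X-{x}. (x+y)/(x-y))"

lemma cc_insert: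
  assumes "finite X" "a \<notin> X" "x \<in> X"
  shows "cc (insert a X) x = cc X x * ((x+a)/(x-a))"
proof -
  have "insert a X - {x} = insert a (X - {x})" using assms by auto
  then show ?thesis using assms unfolding cc_def by (simp add: mult_ac)
qed

lemma pf_a:
  fixes X :: "'a::field set"
  assumes "finite X"
  shows "\<forall>t. t \<notin> X \<longrightarrow> (\<Prod>y\<in>X. (t+y)/(t-y)) = 1 + (\<Sum>x\<in>X. cc X x / (t - x))"
  using assms
proof (induction X rule: finite_induct)
  case empty
  then show ?case by simp
next
  case (insert a X)
  show ?case
  proof (intro allI impI)
    fix t assume t: "t \<notin> insert a X"
    have ta: "t - a \<noteq> 0" using t by auto
    have IHt: "(\<Prod>y\<in>X. (t+y)/(t-y)) = 1 + (\<Sum>x\<in>X. cc X x / (t - x))"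
      using insert.IH t by auto
    have IHa: "(\<Prod>y\<in>X. (a+y)/(a-y)) = 1 + (\<Sum>x\<in>X. cc X x / (a - x))"
      using insert.IH insert.hyps by auto
    have ca: "cc (insert a X) a = 2*a*(1 + (\<Sum>x\<in>X. cc X x / (a - x)))"
    proof -
      have "insert a X - {a} = X" using insert.hyps by auto
      then have "cc (insert a X) a = 2*a*(\<Prod>y\<in>X. (a+y)/(a-y))" by (simp add: cc_def)
      then show ?thesis using IHa by simp
    qed
    have trm: "cc X x * ((t+a)/((t-a)*(t-x))) =
        2*a*(cc X x / (a - x)) / (t-a) + cc X x * ((x+a)/(x-a)) / (t-x)" if "x \<in> X" for x
    proof -
      have "x \<noteq> a" "t \<noteq> x" using that insert.hyps t by auto
      then have "x - a \<noteq> 0" "t - x \<noteq> 0" "a - x \<noteq> 0" by auto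
      then show ?thesis using ta apply (simp add: divide_simps) by (simp add: algebra_simps)
    qed
    have "(\<Prod>y\<in>insert a X. (t+y)/(t-y)) = (t+a)/(t-a) * (1 + (\<Sum>x\<in>X. cc X x / (t - x)))"
      using insert.hyps IHt by simp
    also have "\<dots> = 1 + 2*a/(t-a) + (\<Sum>x\<in>X. cc X x * ((t+a)/((t-a)*(t-x))))"
    proof -
      have e1: "(t+a)/(t-a) = 1 + 2*a/(t-a)" using ta by (simp add: field_simps)
      have e2: "(t+a)/(t-a) * (\<Sum>x\<in>X. cc X x/(t-x)) = (\<Sum>x\<in>X. cc X x * ((t+a)/((t-a)*(t-x))))"
        by (simp add: sum_distrib_left mult_ac)
      show ?thesis by (simp only: distrib_left e2) (simp add: e1)
    qed
    also have "\<dots> = 1 + 2*a/(t-a) + (\<Sum>x\<in>X. 2*a*(cc X x / (a - x)) / (t-a)) + (\<Sum>x\<in>X. cc (insert a X) x / (t-x))"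
      using trm insert.hyps by (simp add: sum.distrib cc_insert)
    also have "\<dots> = 1 + (\<Sum>x\<in>insert a X. cc (insert a X) x / (t - x))"
    proof -
      have "cc (insert a X) a/(t-a) = 2*a/(t-a) + (\<Sum>x\<in>X. 2*a*(cc X x/(a-x))/(t-a))"
        unfolding ca distrib_left add_divide_distrib sum_divide_distrib sum_distrib_left by simp
      then show ?thesis using insert.hyps by simp
    qed
    finally show "(\<Prod>y\<in>insert a X. (t+y)/(t-y)) = 1 + (\<Sum>x\<in>insert a X. cc (insert a X) x / (t - x))" .
  qed
qed

lemma pf_b:
  fixes X :: "'a::field set"
  assumes "finite X"
  shows "(\<Sum>x\<in>X. cc X x) = 2 * (\<Sum>x\<in>X. x)"
  using assms
proof (induction X rule: finite_induct)
  case empty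
  then show ?case by simp
next
  case (insert a X)
  have IHa: "(\<Prod>y\<in>X. (a+y)/(a-y)) = 1 + (\<Sum>x\<in>X. cc X x / (a - x))"
    using pf_a[OF insert.hyps(1)] insert.hyps by auto
  have ca: "cc (insert a X) a = 2*a + (\<Sum>x\<in>X. 2*a*(cc X x / (a - x)))"
  proof -
    have "insert a X - {a} = X" using insert.hyps by auto
    then have "cc (insert a X) a = 2*a*(\<Prod>y\<in>X. (a+y)/(a-y))" by (simp add: cc_def)
    then show ?thesis using IHa by (simp add: distrib_left sum_distrib_left)
  qed
  have trm: "2*a*(cc X x / (a - x)) + cc X x * ((x+a)/(x-a)) = cc X x" if "x \<in> X" for x
  proof -
    have "a - x \<noteq> 0" "x - a \<noteq> 0" using that insert.hyps by auto
    then show ?thesis apply (simp add: divide_simps) by (simp add: algebra_simps)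
  qed
  have "(\<Sum>x\<in>insert a X. cc (insert a X) x) = cc (insert a X) a + (\<Sum>x\<in>X. cc X x * ((x+a)/(x-a)))"
    using insert.hyps by (simp add: cc_insert)
  also have "\<dots> = 2*a + (\<Sum>x\<in>X. cc X x)"
    unfolding ca using trm by (simp add: sum.distrib[symmetric])
  finally show ?case using insert by (simp add: distrib_left)
qed

lemma pf_main:
  fixes b :: "nat \<Rightarrow> 'a::field_char_0"
  assumes "finite A" "inj_on b A"
  shows "(\<Sum>m\<in>A. b m * (\<Prod>j\<in>A-{m}. (b m + b j)/(b m - b j))) = (\<Sum>m\<in>A. b m)"
proof -
  let ?X = "b ` A"
  have "(\<Sum>m\<in>A. b m * (\<Prod>j\<in>A-{m}. (b m + b j)/(b m - b j))) = (\<Sum>m\<in>A. cc ?X (b m) / 2)"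
  proof (rule sum.cong[OF refl])
    fix m assume m: "m \<in> A"
    have "b ` A - {b m} = b ` (A - {m})" using assms m by (auto simp: inj_on_def)
    moreover have "inj_on b (A - {m})" using assms by (auto intro: inj_on_subset)
    ultimately have "(\<Prod>y\<in>?X-{b m}. (b m+y)/(b m-y)) = (\<Prod>j\<in>A-{m}. (b m + b j)/(b m - b j))"
      by (simp add: prod.reindex)
    then show "b m * (\<Prod>j\<in>A-{m}. (b m + b j)/(b m - b j)) = cc ?X (b m) / 2"
      by (simp add: cc_def)
  qed
  also have "\<dots> = (\<Sum>x\<in>?X. cc ?X x) / 2"
    using assms by (simp add: sum.reindex sum_divide_distrib)
  also have "\<dots> = (\<Sum>m\<in>A. b m)"
  proof -
    have h: "(\<Sum>x\<in>?X. cc ?X x) = 2 * (\<Sum>x\<in>?X. x)" by (rule pf_b) (use assms in simp)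
    show ?thesis by (simp only: h) (use assms in \<open>simp add: sum.reindex\<close>)
  qed
  finally show ?thesis .
qed



definition sh :: "nat \<Rightarrow> nat \<Rightarrow> nat" where "sh m i = (if i < m then i else Suc i)"
definition un :: "nat \<Rightarrow> nat \<Rightarrow> nat" where "un m j = (if j < m then j else j - 1)"

lemma split3:
  fixes g :: "nat \<times> nat \<Rightarrow> 'a::comm_monoid_mult"
  assumes "finite T" "T = T1 \<union> T2 \<union> T3" "T1 \<inter> T2 = {}" "(T1 \<union> T2) \<inter> T3 = {}"
  shows "prod g T = prod g T1 * prod g T2 * prod g T3"
proof -
  have "finite T1" "finite T2" "finite T3" using assms by auto
  then show ?thesis using assms by (simp add: prod.union_disjoint)
qed

lemma PP_split:
  fixes f :: "nat \<Rightarrow> nat \<Rightarrow> 'a::comm_monoid_mult"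
  assumes m: "1 \<le> m" "m \<le> Suc n"
  shows "(\<Prod>i=1..Suc n. \<Prod>j\<in>{i<..Suc n}. f i j) =
     (\<Prod>i=1..n. \<Prod>j\<in>{i<..n}. f (sh m i) (sh m j)) * (\<Prod>i\<in>{1..<m}. f i m) * (\<Prod>j\<in>{m<..Suc n}. f m j)"
proof -
  let ?T = "SIGMA i:{1..Suc n}. {i<..Suc n}"
  let ?T1 = "{p\<in>?T. fst p \<noteq> m \<and> snd p \<noteq> m}"
  let ?T2 = "{1..<m} \<times> {m}"
  let ?T3 = "{m} \<times> {m<..Suc n}"
  have T: "?T = ?T1 \<union> ?T2 \<union> ?T3" using m by auto
  have "(\<Prod>i=1..Suc n. \<Prod>j\<in>{i<..Suc n}. f i j) = prod (case_prod f) ?T"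
    by (rule prod.Sigma[of "{1..Suc n}" "\<lambda>i. {i<..Suc n}" f]) auto
  also have "\<dots> = prod (case_prod f) ?T1 * prod (case_prod f) ?T2 * prod (case_prod f) ?T3"
    by (rule split3[OF _ T]) auto
  also have "prod (case_prod f) ?T1 = prod (\<lambda>(i,j). f (sh m i) (sh m j)) (SIGMA i:{1..n}. {i<..n})"
    apply (rule prod.reindex_bij_witness[where i="\<lambda>(i,j). (sh m i, sh m j)" and j="\<lambda>(i,j). (un m i, un m j)"])
    using m by (auto simp: sh_def un_def split: if_splits)
  also have "\<dots> = (\<Prod>i=1..n. \<Prod>j\<in>{i<..n}. f (sh m i) (sh m j))"
    by (rule prod.Sigma[symmetric]) auto
  also have "prod (case_prod f) ?T2 = (\<Prod>i\<in>{1..<m}. f i m)"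
    by (simp add: prod.Sigma[symmetric])
  also have "prod (case_prod f) ?T3 = (\<Prod>j\<in>{m<..Suc n}. f m j)"
    by (simp add: prod.Sigma[symmetric])
  finally show ?thesis .
qed

lemma QQ_split:
  fixes f :: "nat \<Rightarrow> nat \<Rightarrow> 'a::comm_monoid_mult"
  assumes m: "1 \<le> m" "m \<le> Suc n"
  shows "(\<Prod>i=1..Suc n. \<Prod>j=i..Suc n. f i j) =
     (\<Prod>i=1..n. \<Prod>j=i..n. f (sh m i) (sh m j)) * (\<Prod>i\<in>{1..<m}. f i m) * (\<Prod>j=m..Suc n. f m j)"
proof -
  let ?T = "SIGMA i:{1..Suc n}. {i..Suc n}"
  let ?T1 = "{p\<in>?T. fst p \<noteq> m \<and> snd p \<noteq> m}"
  let ?T2 = "{1..<m} \<times> {m}"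
  let ?T3 = "{m} \<times> {m..Suc n}"
  have T: "?T = ?T1 \<union> ?T2 \<union> ?T3" using m by auto
  have "(\<Prod>i=1..Suc n. \<Prod>j=i..Suc n. f i j) = prod (case_prod f) ?T"
    by (rule prod.Sigma[of "{1..Suc n}" "\<lambda>i. {i..Suc n}" f]) auto
  also have "\<dots> = prod (case_prod f) ?T1 * prod (case_prod f) ?T2 * prod (case_prod f) ?T3"
    by (rule split3[OF _ T]) auto
  also have "prod (case_prod f) ?T1 = prod (\<lambda>(i,j). f (sh m i) (sh m j)) (SIGMA i:{1..n}. {i..n})"
    apply (rule prod.reindex_bij_witness[where i="\<lambda>(i,j). (sh m i, sh m j)" and j="\<lambda>(i,j). (un m i, un m j)"])
    using m by (auto simp: sh_def un_def split: if_splits)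
  also have "\<dots> = (\<Prod>i=1..n. \<Prod>j=i..n. f (sh m i) (sh m j))"
    by (rule prod.Sigma[symmetric]) auto
  also have "prod (case_prod f) ?T2 = (\<Prod>i\<in>{1..<m}. f i m)"
    by (simp add: prod.Sigma[symmetric])
  also have "prod (case_prod f) ?T3 = (\<Prod>j=m..Suc n. f m j)"
    by (simp add: prod.Sigma[symmetric])
  finally show ?thesis .
qed



definition rho :: "nat \<Rightarrow> nat \<Rightarrow> nat \<Rightarrow> nat" where
  "rho n m i = (if i < m then i else if i < n then Suc i else if i = n then m else i)"
definition rhoi :: "nat \<Rightarrow> nat \<Rightarrow> nat \<Rightarrow> nat" where
  "rhoi n m j = (if j < m then j else if j = m then n else if j \<le> n then j - 1 else j)"

lemma rhoi_rho: "1 \<le> m \<Longrightarrow> m \<le> n \<Longrightarrow> rhoi n m (rho n m i) = i"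
  by (auto simp: rho_def rhoi_def)
lemma rho_rhoi: "1 \<le> m \<Longrightarrow> m \<le> n \<Longrightarrow> rho n m (rhoi n m i) = i"
  by (auto simp: rho_def rhoi_def)

lemma rho_permutes: assumes "1 \<le> m" "m \<le> n" shows "rho n m permutes {1..n}"
  unfolding permutes_def
proof (intro conjI allI impI)
  fix x assume "x \<notin> {1..n}" then show "rho n m x = x" using assms by (auto simp: rho_def)
next
  fix y show "\<exists>!x. rho n m x = y"
  proof (rule ex1I[of _ "rhoi n m y"])
    show "rho n m (rhoi n m y) = y" using assms by (simp add: rho_rhoi)
    fix x assume "rho n m x = y" then show "x = rhoi n m y" using assms by (auto simp: rhoi_rho)
  qed
qed

lemma rhoi_permutes: assumes "1 \<le> m" "m \<le> n" shows "rhoi n m permutes {1..n}"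
  unfolding permutes_def
proof (intro conjI allI impI)
  fix x assume "x \<notin> {1..n}" then show "rhoi n m x = x" using assms by (auto simp: rhoi_def)
next
  fix y show "\<exists>!x. rhoi n m x = y"
  proof (rule ex1I[of _ "rho n m y"])
    show "rhoi n m (rho n m y) = y" using assms by (simp add: rhoi_rho)
    fix x assume "rhoi n m x = y" then show "x = rho n m y" using assms by (auto simp: rho_rhoi)
  qed
qed

lemma rho_step: "m < n \<Longrightarrow> rho n m = Transposition.transpose m (Suc m) \<circ> rho n (Suc m)"
proof
  fix x assume mn: "m < n"
  show "rho n m x = (Transposition.transpose m (Suc m) \<circ> rho n (Suc m)) x"
    using mn by (cases "x < m"; cases "x = m"; cases "x < n"; cases "x = n") (simp_all add: rho_def transpose_def)
qed

lemma sign_rho: "1 \<le> m \<Longrightarrow> m \<le> n \<Longrightarrow> sign (rho n m) = (-1) ^ (n - m)"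
proof (induction "n - m" arbitrary: m)
  case 0
  then have "m = n" by simp
  then have "rho n m = id" by (auto simp: fun_eq_iff rho_def)
  then show ?case using 0 by simp
next
  case (Suc d)
  then have mn: "m < n" by simp
  have dd: "d = n - Suc m" using Suc.hyps(2) by simp
  have IH: "sign (rho n (Suc m)) = (-1) ^ (n - Suc m)" using Suc.hyps(1)[OF dd] mn by simp
  have "permutation (rho n (Suc m))"
    using rho_permutes[of "Suc m" n] mn unfolding permutation_permutes by (intro exI[of _ "{1..n}"]) simp
  then have "sign (rho n m) = sign (Transposition.transpose m (Suc m)) * sign (rho n (Suc m))"
    by (simp only: rho_step[OF mn]) (rule sign_compose[OF permutation_swap_id])
  also have "\<dots> = - ((-1) ^ (n - Suc m))" by (simp only: IH sign_swap_id) simp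
  also have "\<dots> = (-1) ^ (n - m)" using mn by (simp add: Suc_diff_Suc[symmetric])
  finally show ?case .
qed

definition Lf :: "nat \<Rightarrow> (nat \<Rightarrow> 'a::field_char_0) \<Rightarrow> 'a" where
  "Lf n b = (\<Sum>\<sigma>\<in>{\<sigma>. \<sigma> permutes {1..n}}. of_int (sign \<sigma>) / (\<Prod>k=1..n. \<Sum>i=1..k. b (\<sigma> i)))"

lemma sum_perm_decomp:
  fixes g :: "(nat \<Rightarrow> nat) \<Rightarrow> 'a::comm_monoid_add"
  shows "(\<Sum>\<sigma>\<in>{\<sigma>. \<sigma> permutes {1..Suc n}}. g \<sigma>) =
         (\<Sum>m=1..Suc n. \<Sum>\<tau>\<in>{\<tau>. \<tau> permutes {1..n}}. g (rho (Suc n) m \<circ> \<tau>))"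
proof -
  let ?N = "Suc n"
  have "(\<Sum>m=1..Suc n. \<Sum>\<tau>\<in>{\<tau>. \<tau> permutes {1..n}}. g (rho (Suc n) m \<circ> \<tau>)) =
        (\<Sum>(m,\<tau>)\<in>(SIGMA m:{1..Suc n}. {\<tau>. \<tau> permutes {1..n}}). g (rho (Suc n) m \<circ> \<tau>))"
    by (rule sum.Sigma) (auto simp: finite_permutations)
  also have "\<dots> = (\<Sum>\<sigma>\<in>{\<sigma>. \<sigma> permutes {1..Suc n}}. g \<sigma>)"
  proof (rule sym, rule sum.reindex_bij_witness[where i="\<lambda>(m,\<tau>). rho ?N m \<circ> \<tau>" and j="\<lambda>\<sigma>. (\<sigma> ?N, rhoi ?N (\<sigma> ?N) \<circ> \<sigma>)"])
    fix \<sigma> assume s: "\<sigma> \<in> {\<sigma>. \<sigma> permutes {1..Suc n}}"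
    then have sp: "\<sigma> permutes {1..?N}" by simp
    have m: "1 \<le> \<sigma> ?N" "\<sigma> ?N \<le> ?N" using permutes_in_image[OF sp, of ?N] by auto
    show "(case (\<sigma> ?N, rhoi ?N (\<sigma> ?N) \<circ> \<sigma>) of (m, \<tau>) \<Rightarrow> rho ?N m \<circ> \<tau>) = \<sigma>"
      using m by (simp add: fun_eq_iff rho_rhoi)
    have pp: "rhoi ?N (\<sigma> ?N) \<circ> \<sigma> permutes {1..?N}"
      by (rule permutes_compose[OF sp rhoi_permutes[OF m]])
    have fN: "(rhoi ?N (\<sigma> ?N) \<circ> \<sigma>) ?N = ?N" by (simp add: rhoi_def)
    have "rhoi ?N (\<sigma> ?N) \<circ> \<sigma> permutes {1..n}"
      by (rule permutes_superset[OF pp]) (metis fN DiffE atLeastAtMost_iff le_SucE le_antisym order_refl)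
    then show "(\<sigma> ?N, rhoi ?N (\<sigma> ?N) \<circ> \<sigma>) \<in> (SIGMA m:{1..Suc n}. {\<tau>. \<tau> permutes {1..n}})"
      using m by auto
    show "(case (\<sigma> ?N, rhoi ?N (\<sigma> ?N) \<circ> \<sigma>) of (m, \<tau>) \<Rightarrow> g (rho ?N m \<circ> \<tau>)) = g \<sigma>"
      using m by (simp add: fun_eq_iff rho_rhoi o_def)
  next
    fix p assume p: "p \<in> (SIGMA m:{1..Suc n}. {\<tau>. \<tau> permutes {1..n}})"
    then obtain m \<tau> where pm: "p = (m,\<tau>)" "1 \<le> m" "m \<le> ?N" "\<tau> permutes {1..n}" by auto
    have tN: "\<tau> ?N = ?N" using permutes_not_in[OF pm(4)] by simp
    show "(case p of (m, \<tau>) \<Rightarrow> rho ?N m \<circ> \<tau>) \<in> {\<sigma>. \<sigma> permutes {1..Suc n}}"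
      using pm permutes_compose[OF permutes_subset[OF pm(4)] rho_permutes[OF pm(2,3)]] by auto
    have "rho ?N m ?N = m" using pm by (simp add: rho_def)
    then show "(case (case p of (m, \<tau>) \<Rightarrow> rho ?N m \<circ> \<tau>) of \<sigma> \<Rightarrow> (\<sigma> ?N, rhoi ?N (\<sigma> ?N) \<circ> \<sigma>)) = p"
      using pm tN by (simp add: fun_eq_iff rhoi_rho)
  qed
  finally show ?thesis ..
qed

lemma rho_sh: "i \<le> n \<Longrightarrow> rho (Suc n) m i = sh m i"
  by (simp add: rho_def sh_def)

lemma Lf_rec:
  fixes b :: "nat \<Rightarrow> 'a::field_char_0"
  shows "Lf (Suc n) b = (1 / (\<Sum>i=1..Suc n. b i)) * (\<Sum>m=1..Suc n. (-1)^(Suc n - m) * Lf n (b \<circ> sh m))"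
proof -
  let ?N = "Suc n"
  let ?S = "\<Sum>i=1..Suc n. b i"
  have "Lf (Suc n) b = (\<Sum>m=1..Suc n. \<Sum>\<tau>\<in>{\<tau>. \<tau> permutes {1..n}}.
      of_int (sign (rho ?N m \<circ> \<tau>)) / (\<Prod>k=1..?N. \<Sum>i=1..k. b ((rho ?N m \<circ> \<tau>) i)))"
    unfolding Lf_def by (rule sum_perm_decomp)
  also have "\<dots> = (\<Sum>m=1..Suc n. (1 / ?S) * ((-1)^(Suc n - m) * Lf n (b \<circ> sh m)))"
  proof (rule sum.cong[OF refl])
    fix m assume m: "m \<in> {1..Suc n}"
    then have m1: "1 \<le> m" "m \<le> ?N" by auto
    have "(\<Sum>\<tau>\<in>{\<tau>. \<tau> permutes {1..n}}.
      of_int (sign (rho ?N m \<circ> \<tau>)) / (\<Prod>k=1..?N. \<Sum>i=1..k. b ((rho ?N m \<circ> \<tau>) i))) =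
      (\<Sum>\<tau>\<in>{\<tau>. \<tau> permutes {1..n}}. (1 / ?S) * ((-1)^(Suc n - m) *
          (of_int (sign \<tau>) / (\<Prod>k=1..n. \<Sum>i=1..k. (b \<circ> sh m) (\<tau> i)))))"
    proof (rule sum.cong[OF refl])
      fix \<tau> assume "\<tau> \<in> {\<tau>. \<tau> permutes {1..n}}"
      then have tp: "\<tau> permutes {1..n}" by simp
      have "permutation \<tau>" using tp unfolding permutation_permutes by (intro exI[of _ "{1..n}"]) simp
      moreover have "permutation (rho ?N m)" using rho_permutes[OF m1] unfolding permutation_permutes
        by (intro exI[of _ "{1..?N}"]) simp
      ultimately have sg: "sign (rho ?N m \<circ> \<tau>) = (-1)^(Suc n - m) * sign \<tau>"
        by (simp add: sign_compose sign_rho[OF m1])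
      have pp: "rho ?N m \<circ> \<tau> permutes {1..?N}"
        by (rule permutes_compose[OF permutes_subset[OF tp] rho_permutes[OF m1]]) auto
      have last: "(\<Sum>i=1..?N. b ((rho ?N m \<circ> \<tau>) i)) = ?S"
        using sum.permute[OF pp, of b] by (simp add: o_def)
      have inner: "(\<Sum>i=1..k. b ((rho ?N m \<circ> \<tau>) i)) = (\<Sum>i=1..k. (b \<circ> sh m) (\<tau> i))"
        if "k \<in> {1..n}" for k
      proof (rule sum.cong[OF refl])
        fix i assume "i \<in> {1..k}"
        then have "i \<in> {1..n}" using that by auto
        then have "\<tau> i \<in> {1..n}" using permutes_in_image[OF tp] by simp
        then show "b ((rho ?N m \<circ> \<tau>) i) = (b \<circ> sh m) (\<tau> i)" by (simp add: rho_sh)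
      qed
      have "(\<Prod>k=1..?N. \<Sum>i=1..k. b ((rho ?N m \<circ> \<tau>) i)) =
            (\<Prod>k=1..n. \<Sum>i=1..k. (b \<circ> sh m) (\<tau> i)) * ?S"
      proof -
        have pr: "(\<Prod>k=1..n. \<Sum>i=1..k. b ((rho ?N m \<circ> \<tau>) i)) = (\<Prod>k=1..n. \<Sum>i=1..k. (b \<circ> sh m) (\<tau> i))"
          by (rule prod.cong[OF refl]) (rule inner)
        have "(\<Prod>k=1..?N. \<Sum>i=1..k. b ((rho ?N m \<circ> \<tau>) i)) =
          (\<Sum>i=1..?N. b ((rho ?N m \<circ> \<tau>) i)) * (\<Prod>k=1..n. \<Sum>i=1..k. b ((rho ?N m \<circ> \<tau>) i))"
          by (rule prod.nat_ivl_Suc') simp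
        then show ?thesis by (simp only: pr last mult.commute)
      qed
      then show "of_int (sign (rho ?N m \<circ> \<tau>)) / (\<Prod>k=1..?N. \<Sum>i=1..k. b ((rho ?N m \<circ> \<tau>) i)) =
          (1 / ?S) * ((-1)^(Suc n - m) * (of_int (sign \<tau>) / (\<Prod>k=1..n. \<Sum>i=1..k. (b \<circ> sh m) (\<tau> i))))"
        by (simp add: sg)
    qed
    also have "\<dots> = (1 / ?S) * ((-1)^(Suc n - m) * Lf n (b \<circ> sh m))"
      unfolding Lf_def by (simp add: sum_distrib_left)
    finally show "(\<Sum>\<tau>\<in>{\<tau>. \<tau> permutes {1..n}}.
      of_int (sign (rho ?N m \<circ> \<tau>)) / (\<Prod>k=1..?N. \<Sum>i=1..k. b ((rho ?N m \<circ> \<tau>) i))) =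
      (1 / ?S) * ((-1)^(Suc n - m) * Lf n (b \<circ> sh m))" .
  qed
  also have "\<dots> = (1 / ?S) * (\<Sum>m=1..Suc n. (-1)^(Suc n - m) * Lf n (b \<circ> sh m))"
    by (rule sum_distrib_left[symmetric])
  finally show ?thesis .
qed



definition Vf :: "nat \<Rightarrow> (nat \<Rightarrow> 'a::field_char_0) \<Rightarrow> 'a" where
  "Vf n b = (\<Prod>i=1..n. \<Prod>j\<in>{i<..n}. (b j - b i))"
definition Wf :: "nat \<Rightarrow> (nat \<Rightarrow> 'a::field_char_0) \<Rightarrow> 'a" where
  "Wf n b = (\<Prod>i=1..n. \<Prod>j=i..n. (b i + b j))"
definition Gf :: "nat \<Rightarrow> (nat \<Rightarrow> 'a::field_char_0) \<Rightarrow> 'a" where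
  "Gf n b = 2 ^ n * Vf n b / Wf n b"

lemma split_minus_m:
  fixes m N :: nat
  assumes "1 \<le> m" "m \<le> N"
  shows "(\<Prod>j\<in>{1..N}-{m}. g j) = (\<Prod>i\<in>{1..<m}. g i) * (\<Prod>j\<in>{m<..N}. g j)"
proof -
  have "{1..N}-{m} = {1..<m} \<union> {m<..N}" using assms by auto
  moreover have "prod g ({1..<m} \<union> {m<..N}) = prod g {1..<m} * prod g {m<..N}"
    by (rule prod.union_disjoint) auto
  ultimately show ?thesis by (simp only:)
qed

lemma V_split:
  fixes b :: "nat \<Rightarrow> 'a::field_char_0"
  assumes m: "1 \<le> m" "m \<le> Suc n"
  shows "Vf (Suc n) b = Vf n (b \<circ> sh m) * (-1)^(Suc n - m) * (\<Prod>j\<in>{1..Suc n}-{m}. (b m - b j))"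
proof -
  have e: "Vf n (b \<circ> sh m) = (\<Prod>i=1..n. \<Prod>j\<in>{i<..n}. b (sh m j) - b (sh m i))"
    by (simp add: Vf_def)
  have 1: "Vf (Suc n) b = Vf n (b \<circ> sh m) * (\<Prod>i\<in>{1..<m}. b m - b i) * (\<Prod>j\<in>{m<..Suc n}. b j - b m)"
    unfolding e unfolding Vf_def by (rule PP_split[OF m, of "\<lambda>i j. b j - b i"])
  have 2: "(\<Prod>j\<in>{m<..Suc n}. b j - b m) = (-1)^(Suc n - m) * (\<Prod>j\<in>{m<..Suc n}. b m - b j)"
    using prod_uminus[of "\<lambda>j. b m - b j" "{m<..Suc n}"] by simp
  show ?thesis unfolding 1 2 split_minus_m[OF m, of "\<lambda>j. b m - b j"] by (simp only: mult_ac)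
qed

lemma W_split:
  fixes b :: "nat \<Rightarrow> 'a::field_char_0"
  assumes m: "1 \<le> m" "m \<le> Suc n"
  shows "Wf (Suc n) b = Wf n (b \<circ> sh m) * (2 * b m) * (\<Prod>j\<in>{1..Suc n}-{m}. (b m + b j))"
proof -
  have e: "Wf n (b \<circ> sh m) = (\<Prod>i=1..n. \<Prod>j=i..n. b (sh m i) + b (sh m j))"
    by (simp add: Wf_def)
  have 1: "Wf (Suc n) b = Wf n (b \<circ> sh m) * (\<Prod>i\<in>{1..<m}. b i + b m) * (\<Prod>j=m..Suc n. b m + b j)"
    unfolding e unfolding Wf_def by (rule QQ_split[OF m, of "\<lambda>i j. b i + b j"])
  have 2: "(\<Prod>j=m..Suc n. b m + b j) = (2 * b m) * (\<Prod>j\<in>{m<..Suc n}. b m + b j)"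
  proof -
    have "(\<Prod>j=m..Suc n. b m + b j) = (b m + b m) * (\<Prod>j=Suc m..Suc n. b m + b j)"
      by (rule prod.atLeast_Suc_atMost) (use m in simp)
    moreover have "{Suc m..Suc n} = {m<..Suc n}" by auto
    ultimately show ?thesis by (simp only: mult_2)
  qed
  have 3: "(\<Prod>i\<in>{1..<m}. b i + b m) = (\<Prod>i\<in>{1..<m}. b m + b i)" by (simp add: add.commute)
  show ?thesis unfolding 1 2 3 split_minus_m[OF m, of "\<lambda>j. b m + b j"] by (simp only: mult_ac)
qed

definition ND :: "nat \<Rightarrow> (nat \<Rightarrow> 'a::field_char_0) \<Rightarrow> bool" where
  "ND n b = (\<forall>S. S \<subseteq> {1..n} \<longrightarrow> S \<noteq> {} \<longrightarrow> sum b S \<noteq> 0)"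

lemma ND_single: "ND n b \<Longrightarrow> i \<in> {1..n} \<Longrightarrow> b i \<noteq> 0"
  unfolding ND_def by (drule spec[of _ "{i}"]) auto

lemma ND_pair: "ND n b \<Longrightarrow> i \<in> {1..n} \<Longrightarrow> j \<in> {1..n} \<Longrightarrow> i \<noteq> j \<Longrightarrow> b i + b j \<noteq> 0"
  unfolding ND_def by (drule spec[of _ "{i,j}"]) auto

lemma ND_W: assumes "ND n b" shows "Wf n b \<noteq> 0"
  unfolding Wf_def
proof (subst prod_zero_iff, simp, rule notI)
  assume "\<exists>i\<in>{1..n}. (\<Prod>j = i..n. b i + b j) = 0"
  then obtain i j where ij: "i \<in> {1..n}" "j \<in> {i..n}" "b i + b j = 0" by auto
  show False
  proof (cases "i = j")
    case True
    then show False using ij ND_single[OF assms ij(1)] by simp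
  next
    case False
    then show False using ij ND_pair[OF assms ij(1), of j] by auto
  qed
qed

lemma Gf_rec:
  fixes b :: "nat \<Rightarrow> 'a::field_char_0"
  assumes inj: "inj_on b {1..Suc n}" and nd: "ND (Suc n) b"
  shows "(\<Sum>m=1..Suc n. (-1)^(Suc n - m) * Gf n (b \<circ> sh m)) = (\<Sum>i=1..Suc n. b i) * Gf (Suc n) b"
proof -
  let ?N = "Suc n"
  have trm: "(-1)^(Suc n - m) * Gf n (b \<circ> sh m) =
      Gf ?N b * (b m * (\<Prod>j\<in>{1..?N}-{m}. (b m + b j)/(b m - b j)))" if m: "m \<in> {1..?N}" for m
  proof -
    have m1: "1 \<le> m" "m \<le> ?N" using m by auto
    define s :: 'a where "s = (-1)^(Suc n - m)"
    define P where "P = (\<Prod>j\<in>{1..?N}-{m}. (b m - b j))"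
    define Q where "Q = (\<Prod>j\<in>{1..?N}-{m}. (b m + b j))"
    have ss: "s * s = 1" unfolding s_def by (simp add: power_mult_distrib[symmetric])
    have Pnz: "P \<noteq> 0" unfolding P_def using inj m by (auto simp: inj_on_def)
    have Qnz: "Q \<noteq> 0" unfolding Q_def using ND_pair[OF nd m] by auto
    have bnz: "b m \<noteq> 0" using ND_single[OF nd m] .
    have W: "Wf ?N b = Wf n (b \<circ> sh m) * (2 * b m) * Q" unfolding Q_def by (rule W_split[OF m1])
    have V: "Vf ?N b = Vf n (b \<circ> sh m) * s * P" unfolding P_def s_def by (rule V_split[OF m1])
    have Wnz: "Wf ?N b \<noteq> 0" by (rule ND_W[OF nd])
    then have W'nz: "Wf n (b \<circ> sh m) \<noteq> 0" using W by auto
    have PQ: "(\<Prod>j\<in>{1..?N}-{m}. (b m + b j)/(b m - b j)) = Q / P"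
      unfolding P_def Q_def by (rule prod_dividef)
    show ?thesis unfolding PQ Gf_def W V s_def[symmetric]
      using Pnz Qnz bnz W'nz ss by (simp add: field_simps)
  qed
  have "(\<Sum>m=1..Suc n. (-1)^(Suc n - m) * Gf n (b \<circ> sh m)) =
      (\<Sum>m=1..Suc n. Gf ?N b * (b m * (\<Prod>j\<in>{1..?N}-{m}. (b m + b j)/(b m - b j))))"
    by (rule sum.cong[OF refl]) (rule trm)
  also have "\<dots> = Gf ?N b * (\<Sum>m=1..Suc n. b m * (\<Prod>j\<in>{1..?N}-{m}. (b m + b j)/(b m - b j)))"
    by (rule sum_distrib_left[symmetric])
  also have "\<dots> = Gf ?N b * (\<Sum>i=1..Suc n. b i)"
    using pf_main[OF _ inj] by simp
  finally show ?thesis by (simp only: mult.commute)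
qed

lemma LG: "inj_on b {1..n} \<Longrightarrow> ND n b \<Longrightarrow> Lf n b = Gf n (b :: nat \<Rightarrow> 'a::field_char_0)"
proof (induction n arbitrary: b)
  case 0
  then show ?case by (simp add: Lf_def Gf_def Vf_def Wf_def)
next
  case (Suc n)
  let ?N = "Suc n"
  have IH: "Lf n (b \<circ> sh m) = Gf n (b \<circ> sh m)" if m: "m \<in> {1..?N}" for m
  proof (rule Suc.IH)
    have shi: "inj (sh m)" by (auto simp: inj_on_def sh_def split: if_splits)
    have shs: "sh m ` {1..n} \<subseteq> {1..?N}" by (auto simp: sh_def)
    show "inj_on (b \<circ> sh m) {1..n}"
      by (rule comp_inj_on) (use shi inj_on_subset[OF Suc.prems(1) shs] in \<open>auto intro: inj_on_subset\<close>)
    show "ND n (b \<circ> sh m)" unfolding ND_def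
    proof (intro allI impI)
      fix T assume T: "T \<subseteq> {1..n}" "T \<noteq> {}"
      have "sum (b \<circ> sh m) T = sum b (sh m ` T)"
        by (rule sum.reindex[symmetric]) (use shi in \<open>auto intro: inj_on_subset\<close>)
      moreover have "sh m ` T \<subseteq> {1..?N}" using T shs by blast
      moreover have "sh m ` T \<noteq> {}" using T by simp
      moreover note Suc.prems(2)[unfolded ND_def, rule_format, of "sh m ` T"]
      ultimately show "sum (b \<circ> sh m) T \<noteq> 0" by metis
    qed
  qed
  have Snz: "(\<Sum>i=1..?N. b i) \<noteq> 0" using Suc.prems(2) unfolding ND_def by auto
  have "Lf ?N b = (1 / (\<Sum>i=1..?N. b i)) * (\<Sum>m=1..?N. (-1)^(?N - m) * Gf n (b \<circ> sh m))"
    unfolding Lf_rec using IH by simp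
  also have "\<dots> = Gf ?N b" unfolding Gf_rec[OF Suc.prems] using Snz by simp
  finally show ?case .
qed

lemma Lf_zero:
  fixes b :: "nat \<Rightarrow> 'a::field_char_0"
  assumes ij: "i \<in> {1..n}" "j \<in> {1..n}" "i \<noteq> j" "b i = b j"
  shows "Lf n b = 0"
proof -
  let ?t = "Transposition.transpose i j"
  have tp: "?t permutes {1..n}" by (rule permutes_swap_id) (use ij in auto)
  have bt: "b (?t x) = b x" for x using ij by (simp add: transpose_def)
  let ?f = "\<lambda>\<sigma>. of_int (sign \<sigma>) / (\<Prod>k=1..n. \<Sum>i=1..k. b (\<sigma> i)) :: 'a"
  have "Lf n b = (\<Sum>\<sigma>\<in>{\<sigma>. \<sigma> permutes {1..n}}. ?f (?t \<circ> \<sigma>))"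
    unfolding Lf_def by (rule setum_permutations_compose_left[OF tp])
  also have "\<dots> = (\<Sum>\<sigma>\<in>{\<sigma>. \<sigma> permutes {1..n}}. - ?f \<sigma>)"
  proof (rule sum.cong[OF refl])
    fix \<sigma> assume "\<sigma> \<in> {\<sigma>. \<sigma> permutes {1..n}}"
    then have "permutation \<sigma>" unfolding permutation_permutes by (intro exI[of _ "{1..n}"]) simp
    then have "sign (?t \<circ> \<sigma>) = - sign \<sigma>"
      using ij by (simp add: sign_compose[OF permutation_swap_id] sign_swap_id)
    then show "?f (?t \<circ> \<sigma>) = - ?f \<sigma>" by (simp add: bt)
  qed
  also have "\<dots> = - Lf n b" unfolding Lf_def by (simp add: sum_negf)
  finally show ?thesis by simp
qed

theorem lemmaA5:
  fixes n :: nat and b :: "nat \<Rightarrow> 'a::field_char_0"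
  assumes nondeg: "\<And>S. S \<subseteq> {1..n} \<Longrightarrow> S \<noteq> {} \<Longrightarrow> sum b S \<noteq> 0"
  shows "(\<Sum>\<sigma>\<in>{\<sigma>. \<sigma> permutes {1..n}}.
            of_int (sign \<sigma>) / (\<Prod>k=1..n. \<Sum>i=1..k. b (\<sigma> i)))
         = 2 ^ n * (\<Prod>i=1..n. \<Prod>j\<in>{i<..n}. (b j - b i))
               / (\<Prod>i=1..n. \<Prod>j=i..n. (b i + b j))"
proof -
  have nd: "ND n b" unfolding ND_def using nondeg by blast
  show ?thesis
  proof (cases "inj_on b {1..n}")
    case True
    show ?thesis using LG[OF True nd] unfolding Lf_def Gf_def Vf_def Wf_def .
  next
    case False
    then obtain i j where ij: "i \<in> {1..n}" "j \<in> {1..n}" "i \<noteq> j" "b i = b j"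
      unfolding inj_on_def by blast
    have L0: "Lf n b = 0" by (rule Lf_zero[OF ij])
    have "Vf n b = 0"
    proof -
      have "\<exists>p\<in>{1..n}. \<exists>q\<in>{p<..n}. b q - b p = 0"
      proof (cases "i < j")
        case True then show ?thesis using ij by (intro bexI[of _ i] bexI[of _ j]) auto
      next
        case False then have "j < i" using ij by auto
        then show ?thesis using ij by (intro bexI[of _ j] bexI[of _ i]) auto
      qed
      then show ?thesis unfolding Vf_def by (simp add: prod_zero_iff)
    qed
    then show ?thesis using L0 unfolding Lf_def Vf_def by simp
  qed
qed

end
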